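(* Let $(A,\circ,[\cdot,\cdot])$ be a finite-dimensional dual pre-Poisson algebra and let $r\in A\otimes A$ be symmetric and nondegenerate. Let $\mathcal{B}(x,y)=\langle\tilde r^{-1}(x),y\rangle$ for $x,y\in A$. Then $r$ is a solution of the permutative-Leibniz Yang–Baxter equation if and only if, for all $x,y,z\in A$, $$\mathcal{B}(x\circ y,z)=\mathcal{B}(y,x\circ z)+\mathcal{B}(x,y\blacksquare z),\qquad \mathcal{B}([x,y],z)=-\mathcal{B}(y,[x,z])+\mathcal{B}(x,y\square z).$$
   Context: Field $\mathbb{F}$ of characteristic $0$. Dual pre-Poisson algebra: $x\circ(y\circ z)=(x\circ y)\circ z=(y\circ x)\circ z$; $[x,[y,z]]=[[x,y],z]+[y,[x,z]]$; $[x,y\circ z]=[x,y]\circ z+y\circ[x,z]$; $[x\circ y,z]=x\circ[y,z]+y\circ[x,z]$; $[x,y]\circ z=-[y,x]\circ z$. $x\blacksquare y=x\circ y-y\circ x$, $x\square y=[x,y]+[y,x]$. $\tilde r:A^*\to A$ is $\langle\tilde r(u^* ),v^*\rangle=\langle r,u^*\otimes v^*\rangle$; $r$ nondegenerate means $\tilde r$ invertible; symmetric means flip-invariant. PLYBE: for $r=\sum_i a_i\otimes b_i$, $\mathbf{P}(r)=\sum_{i,j}\big(a_i\otimes a_j\otimes b_i\circ b_j-a_i\otimes b_i\circ a_j\otimes b_j+a_i\blacksquare a_j\otimes b_j\otimes b_i\big)$, $\mathbf{L}(r)=\sum_{i,j}\big(a_i\otimes a_j\otimes[b_i,b_j]+a_i\otimes[b_i,a_j]\otimes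 b_j-a_i\square a_j\otimes b_i\otimes b_j\big)$; $r$ is a solution if $\mathbf{P}(r)=\mathbf{L}(r)=0$. *)

theory Defs
  imports "HOL-Analysis.Analysis"
begin

text \<open>A finite-dimensional vector space over a field 'k is modelled as 'k ^ 'n
  with 'n a finite index type (standard basis vectors axis i 1).  Tensors in
  A \<otimes> A are coefficient matrices 'k ^ 'n ^ 'n (r $ i $ j is the coefficient of
  e_i \<otimes> e_j); tensors in A \<otimes> A \<otimes> A are coefficient functions
  'n \<Rightarrow> 'n \<Rightarrow> 'n \<Rightarrow> 'k.  The dual space A* is identified with 'k ^ 'n via
  the dual basis.\<close>

definition bilinear_op :: "('k::field ^ 'n \<Rightarrow> 'k ^ 'n \<Rightarrow> 'k ^ 'n) \<Rightarrow> bool" where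
  "bilinear_op m \<longleftrightarrow>
     (\<forall>x y z. m (x + y) z = m x z + m y z) \<and>
     (\<forall>x y z. m x (y + z) = m x y + m x z) \<and>
     (\<forall>c x y. m (c *s x) y = c *s m x y) \<and>
     (\<forall>c x y. m x (c *s y) = c *s m x y)"

definition dual_pre_Poisson ::
  "('k::field ^ 'n \<Rightarrow> 'k ^ 'n \<Rightarrow> 'k ^ 'n) \<Rightarrow> ('k ^ 'n \<Rightarrow> 'k ^ 'n \<Rightarrow> 'k ^ 'n) \<Rightarrow> bool" where
  "dual_pre_Poisson cc br \<longleftrightarrow> bilinear_op cc \<and> bilinear_op br \<and>
     (\<forall>x y z. cc x (cc y z) = cc (cc x y) z) \<and>
     (\<forall>x y z. cc (cc x y) z = cc (cc y x) z) \<and>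
     (\<forall>x y z. br x (br y z) = br (br x y) z + br y (br x z)) \<and>
     (\<forall>x y z. br x (cc y z) = cc (br x y) z + cc y (br x z)) \<and>
     (\<forall>x y z. br (cc x y) z = cc x (br y z) + cc y (br x z)) \<and>
     (\<forall>x y z. cc (br x y) z = - cc (br y x) z)"

definition bsq :: "('v \<Rightarrow> 'v \<Rightarrow> 'v::ab_group_add) \<Rightarrow> 'v \<Rightarrow> 'v \<Rightarrow> 'v" where
  "bsq cc x y = cc x y - cc y x"

definition wsq :: "('v \<Rightarrow> 'v \<Rightarrow> 'v::ab_group_add) \<Rightarrow> 'v \<Rightarrow> 'v \<Rightarrow> 'v" where
  "wsq br x y = br x y + br y x"

definition pairing :: "'k::comm_ring_1 ^ 'n \<Rightarrow> 'k ^ 'n \<Rightarrow> 'k" where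
  "pairing u x = (\<Sum>i\<in>UNIV. u $ i * x $ i)"

text \<open>\<langle>r~(u*), v*\<rangle> = \<langle>r, u* \<otimes> v*\<rangle>\<close>
definition rtilde :: "'k::comm_ring_1 ^ 'n ^ 'n \<Rightarrow> 'k ^ 'n \<Rightarrow> 'k ^ 'n" where
  "rtilde r u = (\<chi> j. \<Sum>i\<in>UNIV. r $ i $ j * u $ i)"

definition symmetric_tensor :: "'k ^ 'n ^ 'n \<Rightarrow> bool" where
  "symmetric_tensor r \<longleftrightarrow> (\<forall>i j. r $ i $ j = r $ j $ i)"

definition nondegenerate :: "'k::comm_ring_1 ^ 'n ^ 'n \<Rightarrow> bool" where
  "nondegenerate r \<longleftrightarrow> bij (rtilde r)"

definition formB :: "'k::comm_ring_1 ^ 'n ^ 'n \<Rightarrow> 'k ^ 'n \<Rightarrow> 'k ^ 'n \<Rightarrow> 'k" where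
  "formB r x y = pairing (inv (rtilde r) x) y"

definition basisv :: "'n \<Rightarrow> 'k::comm_ring_1 ^ 'n" where
  "basisv i = axis i 1"

definition tensor3 :: "'k::comm_ring_1 ^ 'n \<Rightarrow> 'k ^ 'n \<Rightarrow> 'k ^ 'n \<Rightarrow> 'n \<Rightarrow> 'n \<Rightarrow> 'n \<Rightarrow> 'k" where
  "tensor3 u v w = (\<lambda>p q s. u $ p * v $ q * w $ s)"

definition PLYBE_P ::
  "('k::comm_ring_1 ^ 'n \<Rightarrow> 'k ^ 'n \<Rightarrow> 'k ^ 'n) \<Rightarrow> 'k ^ 'n ^ 'n \<Rightarrow> 'n \<Rightarrow> 'n \<Rightarrow> 'n \<Rightarrow> 'k" where
  "PLYBE_P cc r = (\<lambda>p q s. \<Sum>i\<in>UNIV. \<Sum>j\<in>UNIV. \<Sum>k\<in>UNIV. \<Sum>l\<in>UNIV.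
      r $ i $ j * r $ k $ l *
       (tensor3 (basisv i) (basisv k) (cc (basisv j) (basisv l)) p q s
        - tensor3 (basisv i) (cc (basisv j) (basisv k)) (basisv l) p q s
        + tensor3 (bsq cc (basisv i) (basisv k)) (basisv l) (basisv j) p q s))"

definition PLYBE_L ::
  "('k::comm_ring_1 ^ 'n \<Rightarrow> 'k ^ 'n \<Rightarrow> 'k ^ 'n) \<Rightarrow> 'k ^ 'n ^ 'n \<Rightarrow> 'n \<Rightarrow> 'n \<Rightarrow> 'n \<Rightarrow> 'k" where
  "PLYBE_L br r = (\<lambda>p q s. \<Sum>i\<in>UNIV. \<Sum>j\<in>UNIV. \<Sum>k\<in>UNIV. \<Sum>l\<in>UNIV.
      r $ i $ j * r $ k $ l *
       (tensor3 (basisv i) (basisv k) (br (basisv j) (basisv l)) p q s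
        + tensor3 (basisv i) (br (basisv j) (basisv k)) (basisv l) p q s
        - tensor3 (wsq br (basisv i) (basisv k)) (basisv j) (basisv l) p q s))"

definition PLYBE_solution ::
  "('k::comm_ring_1 ^ 'n \<Rightarrow> 'k ^ 'n \<Rightarrow> 'k ^ 'n) \<Rightarrow> ('k ^ 'n \<Rightarrow> 'k ^ 'n \<Rightarrow> 'k ^ 'n) \<Rightarrow> 'k ^ 'n ^ 'n \<Rightarrow> bool" where
  "PLYBE_solution cc br r \<longleftrightarrow> PLYBE_P cc r = (\<lambda>p q s. 0) \<and> PLYBE_L br r = (\<lambda>p q s. 0)"

end

theory Submission
  imports Defs
begin

lemma bil_zero1: "bilinear_op m \<Longrightarrow> m 0 y = 0"
  unfolding bilinear_op_def by (metis add_cancel_right_right add_0)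
lemma bil_zero2: "bilinear_op m \<Longrightarrow> m x 0 = 0"
  unfolding bilinear_op_def by (metis add_cancel_right_right add_0)

lemma bil_sum1: assumes "bilinear_op m" shows "m (sum f S) y = (\<Sum>j\<in>S. m (f j) y)"
proof (induction S rule: infinite_finite_induct)
  case (infinite A) then show ?case using bil_zero1[OF assms] by simp
next
  case empty then show ?case using bil_zero1[OF assms] by simp
next
  case (insert x F) then show ?case using assms unfolding bilinear_op_def by simp
qed

lemma bil_sum2: assumes "bilinear_op m" shows "m x (sum f S) = (\<Sum>j\<in>S. m x (f j))"
proof (induction S rule: infinite_finite_induct)
  case (infinite A) then show ?case using bil_zero2[OF assms] by simp
next
  case empty then show ?case using bil_zero2[OF assms] by simp
next
  case (insert x F) then show ?case using assms unfolding bilinear_op_def by simp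
qed

lemma pairing_sum: "pairing w (sum f S) = (\<Sum>j\<in>S. pairing w (f j))"
  unfolding pairing_def by (simp add: sum_distrib_left sum.swap[of _ S])

lemma pairing_scale: "pairing w (c *s x) = c * pairing w x"
  unfolding pairing_def by (simp add: sum_distrib_left mult_ac)

lemma bil_expand: fixes m :: "'k::field ^ 'n \<Rightarrow> 'k ^ 'n \<Rightarrow> 'k ^ 'n"
  assumes "bilinear_op m"
  shows "pairing w (m x y) = (\<Sum>j\<in>UNIV. \<Sum>l\<in>UNIV. x$j * y$l * pairing w (m (basisv j) (basisv l)))"
proof -
  have "m x y = m (\<Sum>j\<in>UNIV. x$j *s basisv j) (\<Sum>l\<in>UNIV. y$l *s basisv l)"
    unfolding basisv_def basis_expansion ..
  also have "\<dots> = (\<Sum>j\<in>UNIV. \<Sum>l\<in>UNIV. (x$j * y$l) *s m (basisv j) (basisv l))"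
    using assms unfolding bil_sum1[OF assms] bil_sum2[OF assms] bilinear_op_def
    apply (simp add: vector_smult_assoc)
    apply (subst sum.swap)
    apply (simp add: mult.commute)
    done
  finally show ?thesis by (simp add: pairing_sum pairing_scale)
qed

lemma bil_bsq: "bilinear_op m \<Longrightarrow> bilinear_op (bsq m)"
  unfolding bilinear_op_def bsq_def by (simp add: algebra_simps vector_ssub_ldistrib)
lemma bil_wsq: "bilinear_op m \<Longrightarrow> bilinear_op (wsq m)"
  unfolding bilinear_op_def wsq_def by (simp add: algebra_simps vector_add_ldistrib)

lemma mult_if01[simp]: "(x::'a::semiring_1) * (if P then 1 else 0) = (if P then x else 0)"
  "(if P then 1 else 0) * x = (if P then x else 0)" by auto

lemma pairing_basis: "pairing u (basisv i) = u $ i"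
  unfolding pairing_def basisv_def axis_def by simp

definition ev3 :: "('n::finite \<Rightarrow> 'n \<Rightarrow> 'n \<Rightarrow> 'k::comm_ring_1) \<Rightarrow> 'k^'n \<Rightarrow> 'k^'n \<Rightarrow> 'k^'n \<Rightarrow> 'k" where
  "ev3 F u v w = (\<Sum>p\<in>UNIV. \<Sum>q\<in>UNIV. \<Sum>s\<in>UNIV. u$p * v$q * w$s * F p q s)"

lemma ev3_alt: "ev3 F u v w = (\<Sum>p\<in>UNIV. u$p * (\<Sum>q\<in>UNIV. v$q * (\<Sum>s\<in>UNIV. w$s * F p q s)))"
  unfolding ev3_def by (simp add: sum_distrib_left mult_ac)

lemma basisv_nth: "basisv i $ j = (if j = i then 1 else 0)"
  unfolding basisv_def axis_def by simp

lemma ev3_basis: "ev3 F (basisv p) (basisv q) (basisv s) = F p q s"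
  unfolding ev3_alt basisv_nth by simp

lemma sum3_rev: "(\<Sum>s\<in>A. \<Sum>q\<in>B. \<Sum>p\<in>C. f p q s) = (\<Sum>p\<in>C. \<Sum>q\<in>B. \<Sum>s\<in>A. f p q s)"
proof -
  have "(\<Sum>s\<in>A. \<Sum>q\<in>B. \<Sum>p\<in>C. f p q s) = (\<Sum>s\<in>A. \<Sum>p\<in>C. \<Sum>q\<in>B. f p q s)"
    by (rule sum.cong[OF refl], rule sum.swap)
  also have "\<dots> = (\<Sum>p\<in>C. \<Sum>s\<in>A. \<Sum>q\<in>B. f p q s)" by (rule sum.swap)
  also have "\<dots> = (\<Sum>p\<in>C. \<Sum>q\<in>B. \<Sum>s\<in>A. f p q s)"
    by (rule sum.cong[OF refl], rule sum.swap)
  finally show ?thesis .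
qed

lemma ev3_zero: "(F = (\<lambda>p q s. 0)) \<longleftrightarrow> (\<forall>u v w. ev3 F u v w = 0)"
  apply (rule iffI)
   apply (simp add: ev3_def)
  by (metis ev3_basis)

lemma ev3_tensor3: "ev3 (tensor3 a b c) u v w = pairing u a * pairing v b * pairing w c"
proof -
  have "pairing u a * pairing v b * pairing w c = (\<Sum>s\<in>UNIV. \<Sum>q\<in>UNIV. \<Sum>p\<in>UNIV. (u$p * a$p) * (v$q * b$q) * (w$s * c$s))"
    unfolding pairing_def by (simp add: sum_distrib_left sum_distrib_right)
  also have "\<dots> = (\<Sum>p\<in>UNIV. \<Sum>q\<in>UNIV. \<Sum>s\<in>UNIV. (u$p * a$p) * (v$q * b$q) * (w$s * c$s))"
    by (rule sum3_rev)
  finally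
  show ?thesis unfolding ev3_def tensor3_def by (simp add: mult_ac)
qed

lemma ev3_add: "ev3 (\<lambda>p q s. f p q s + g p q s) u v w = ev3 f u v w + ev3 g u v w"
  unfolding ev3_def by (simp add: distrib_left sum.distrib)
lemma ev3_diff: "ev3 (\<lambda>p q s. f p q s - g p q s) u v w = ev3 f u v w - ev3 g u v w"
  unfolding ev3_def by (simp add: right_diff_distrib sum_subtractf)
lemma ev3_cmult: "ev3 (\<lambda>p q s. c * f p q s) u v w = c * ev3 f u v w"
  unfolding ev3_def by (simp add: sum_distrib_left mult_ac)
lemma ev3_zerof: "ev3 (\<lambda>p q s. 0) u v w = 0"
  unfolding ev3_def by simp
lemma ev3_sum: "ev3 (\<lambda>p q s. \<Sum>i\<in>S. f i p q s) u v w = (\<Sum>i\<in>S. ev3 (f i) u v w)"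
proof (induction S rule: infinite_finite_induct)
  case (infinite A) then show ?case by (simp add: ev3_zerof)
next
  case empty then show ?case by (simp add: ev3_zerof)
next
  case (insert x F) then show ?case by (simp add: ev3_add)
qed

lemma rtilde_nth: "rtilde r u $ j = (\<Sum>i\<in>UNIV. r $ i $ j * u $ i)"
  unfolding rtilde_def by simp

lemma sw_inner: "(\<Sum>a\<in>A. \<Sum>b\<in>B. \<Sum>c\<in>C. \<Sum>d\<in>D. f a b c d) = (\<Sum>a\<in>A. \<Sum>b\<in>B. \<Sum>d\<in>D. \<Sum>c\<in>C. f a b c d)"
  by (rule sum.cong[OF refl], rule sum.cong[OF refl], rule sum.swap)

lemma sw_outer: "(\<Sum>a\<in>A. \<Sum>b\<in>B. f a b) = (\<Sum>b\<in>B. \<Sum>a\<in>A. f a b)"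
  by (rule sum.swap)

lemma G: "(\<Sum>j\<in>J. \<Sum>l\<in>L. (\<Sum>i\<in>I. a i j) * (\<Sum>k\<in>K. b k l) * W j l)
   = (\<Sum>i\<in>I. \<Sum>j\<in>J. \<Sum>k\<in>K. \<Sum>l\<in>L. a i j * b k l * (W j l :: 'a::comm_semiring_0))"
proof -
  have "(\<Sum>j\<in>J. \<Sum>l\<in>L. (\<Sum>i\<in>I. a i j) * (\<Sum>k\<in>K. b k l) * W j l)
     = (\<Sum>j\<in>J. \<Sum>l\<in>L. \<Sum>k\<in>K. \<Sum>i\<in>I. a i j * b k l * W j l)"
    by (simp add: sum_distrib_left sum_distrib_right)
  also have "\<dots> = (\<Sum>j\<in>J. \<Sum>l\<in>L. \<Sum>i\<in>I. \<Sum>k\<in>K. a i j * b k l * W j l)"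
    by (rule sw_inner)
  also have "\<dots> = (\<Sum>j\<in>J. \<Sum>i\<in>I. \<Sum>l\<in>L. \<Sum>k\<in>K. a i j * b k l * W j l)"
    by (rule sum.cong[OF refl], rule sum.swap)
  also have "\<dots> = (\<Sum>j\<in>J. \<Sum>i\<in>I. \<Sum>k\<in>K. \<Sum>l\<in>L. a i j * b k l * W j l)"
    by (rule sw_inner)
  also have "\<dots> = (\<Sum>i\<in>I. \<Sum>j\<in>J. \<Sum>k\<in>K. \<Sum>l\<in>L. a i j * b k l * W j l)"
    by (rule sum.swap)
  finally show ?thesis .
qed

lemma evP_raw:
  "ev3 (PLYBE_P cc r) u v w = (\<Sum>i\<in>UNIV. \<Sum>j\<in>UNIV. \<Sum>k\<in>UNIV. \<Sum>l\<in>UNIV.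
      r $ i $ j * r $ k $ l * (u$i * v$k * pairing w (cc (basisv j) (basisv l)))
    - r $ i $ j * r $ k $ l * (u$i * pairing v (cc (basisv j) (basisv k)) * w$l)
    + r $ i $ j * r $ k $ l * (pairing u (bsq cc (basisv i) (basisv k)) * v$l * w$j))"
  unfolding PLYBE_P_def
  by (simp add: ev3_sum ev3_cmult ev3_add ev3_diff ev3_tensor3 pairing_basis algebra_simps)

lemma T_A: assumes "bilinear_op m"
  shows "pairing w (m (rtilde r u) (rtilde r v)) = (\<Sum>i\<in>UNIV. \<Sum>j\<in>UNIV. \<Sum>k\<in>UNIV. \<Sum>l\<in>UNIV.
     r $ i $ j * r $ k $ l * (u$i * v$k * pairing w (m (basisv j) (basisv l))))"
proof -
  have "pairing w (m (rtilde r u) (rtilde r v)) = (\<Sum>j\<in>UNIV. \<Sum>l\<in>UNIV. (\<Sum>i\<in>UNIV. r $ i $ j * u $ i) * (\<Sum>k\<in>UNIV. r $ k $ l * v $ k) * pairing w (m (basisv j) (basisv l)))"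
    unfolding bil_expand[OF assms, of w "rtilde r u" "rtilde r v"] rtilde_nth ..
  also have "\<dots> = (\<Sum>i\<in>UNIV. \<Sum>j\<in>UNIV. \<Sum>k\<in>UNIV. \<Sum>l\<in>UNIV. (r $ i $ j * u $ i) * (r $ k $ l * v $ k) * pairing w (m (basisv j) (basisv l)))"
    by (rule G)
  finally show ?thesis by (simp add: mult_ac)
qed

lemma T_B: assumes "bilinear_op m" and sym: "symmetric_tensor r"
  shows "pairing v (m (rtilde r u) (rtilde r w)) = (\<Sum>i\<in>UNIV. \<Sum>j\<in>UNIV. \<Sum>k\<in>UNIV. \<Sum>l\<in>UNIV.
     r $ i $ j * r $ k $ l * (u$i * pairing v (m (basisv j) (basisv k)) * w$l))"
proof -
  have "pairing v (m (rtilde r u) (rtilde r w)) = (\<Sum>j\<in>UNIV. \<Sum>k\<in>UNIV. (\<Sum>i\<in>UNIV. r $ i $ j * u $ i) * (\<Sum>l\<in>UNIV. r $ l $ k * w $ l) * pairing v (m (basisv j) (basisv k)))"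
    unfolding bil_expand[OF assms(1), of v "rtilde r u" "rtilde r w"] rtilde_nth ..
  also have "\<dots> = (\<Sum>i\<in>UNIV. \<Sum>j\<in>UNIV. \<Sum>l\<in>UNIV. \<Sum>k\<in>UNIV. (r $ i $ j * u $ i) * (r $ l $ k * w $ l) * pairing v (m (basisv j) (basisv k)))"
    by (rule G)
  also have "\<dots> = (\<Sum>i\<in>UNIV. \<Sum>j\<in>UNIV. \<Sum>k\<in>UNIV. \<Sum>l\<in>UNIV. (r $ i $ j * u $ i) * (r $ l $ k * w $ l) * pairing v (m (basisv j) (basisv k)))"
    by (rule sw_inner)
  finally show ?thesis using sym unfolding symmetric_tensor_def by (simp add: mult_ac)
qed

lemma T_C: assumes "bilinear_op m" and sym: "symmetric_tensor r"
  shows "pairing u (m (rtilde r w) (rtilde r v)) = (\<Sum>i\<in>UNIV. \<Sum>j\<in>UNIV. \<Sum>k\<in>UNIV. \<Sum>l\<in>UNIV.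
     r $ i $ j * r $ k $ l * (pairing u (m (basisv i) (basisv k)) * v$l * w$j))"
proof -
  have "pairing u (m (rtilde r w) (rtilde r v)) = (\<Sum>i\<in>UNIV. \<Sum>k\<in>UNIV. (\<Sum>j\<in>UNIV. r $ j $ i * w $ j) * (\<Sum>l\<in>UNIV. r $ l $ k * v $ l) * pairing u (m (basisv i) (basisv k)))"
    unfolding bil_expand[OF assms(1), of u "rtilde r w" "rtilde r v"] rtilde_nth ..
  also have "\<dots> = (\<Sum>j\<in>UNIV. \<Sum>i\<in>UNIV. \<Sum>l\<in>UNIV. \<Sum>k\<in>UNIV. (r $ j $ i * w $ j) * (r $ l $ k * v $ l) * pairing u (m (basisv i) (basisv k)))"
    by (rule G)
  also have "\<dots> = (\<Sum>j\<in>UNIV. \<Sum>i\<in>UNIV. \<Sum>k\<in>UNIV. \<Sum>l\<in>UNIV. (r $ j $ i * w $ j) * (r $ l $ k * v $ l) * pairing u (m (basisv i) (basisv k)))"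
    by (rule sw_inner)
  also have "\<dots> = (\<Sum>i\<in>UNIV. \<Sum>j\<in>UNIV. \<Sum>k\<in>UNIV. \<Sum>l\<in>UNIV. (r $ j $ i * w $ j) * (r $ l $ k * v $ l) * pairing u (m (basisv i) (basisv k)))"
    by (rule sw_outer)
  finally show ?thesis using sym unfolding symmetric_tensor_def by (simp add: mult_ac)
qed

lemma T_D: assumes "bilinear_op m" and sym: "symmetric_tensor r"
  shows "pairing u (m (rtilde r v) (rtilde r w)) = (\<Sum>i\<in>UNIV. \<Sum>j\<in>UNIV. \<Sum>k\<in>UNIV. \<Sum>l\<in>UNIV.
     r $ i $ j * r $ k $ l * (pairing u (m (basisv i) (basisv k)) * v$j * w$l))"
proof -
  have "pairing u (m (rtilde r v) (rtilde r w)) = (\<Sum>i\<in>UNIV. \<Sum>k\<in>UNIV. (\<Sum>j\<in>UNIV. r $ j $ i * v $ j) * (\<Sum>l\<in>UNIV. r $ l $ k * w $ l) * pairing u (m (basisv i) (basisv k)))"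
    unfolding bil_expand[OF assms(1), of u "rtilde r v" "rtilde r w"] rtilde_nth ..
  also have "\<dots> = (\<Sum>j\<in>UNIV. \<Sum>i\<in>UNIV. \<Sum>l\<in>UNIV. \<Sum>k\<in>UNIV. (r $ j $ i * v $ j) * (r $ l $ k * w $ l) * pairing u (m (basisv i) (basisv k)))"
    by (rule G)
  also have "\<dots> = (\<Sum>j\<in>UNIV. \<Sum>i\<in>UNIV. \<Sum>k\<in>UNIV. \<Sum>l\<in>UNIV. (r $ j $ i * v $ j) * (r $ l $ k * w $ l) * pairing u (m (basisv i) (basisv k)))"
    by (rule sw_inner)
  also have "\<dots> = (\<Sum>i\<in>UNIV. \<Sum>j\<in>UNIV. \<Sum>k\<in>UNIV. \<Sum>l\<in>UNIV. (r $ j $ i * v $ j) * (r $ l $ k * w $ l) * pairing u (m (basisv i) (basisv k)))"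
    by (rule sw_outer)
  finally show ?thesis using sym unfolding symmetric_tensor_def by (simp add: mult_ac)
qed

lemma evL_raw:
  "ev3 (PLYBE_L br r) u v w = (\<Sum>i\<in>UNIV. \<Sum>j\<in>UNIV. \<Sum>k\<in>UNIV. \<Sum>l\<in>UNIV.
      r $ i $ j * r $ k $ l * (u$i * v$k * pairing w (br (basisv j) (basisv l)))
    + r $ i $ j * r $ k $ l * (u$i * pairing v (br (basisv j) (basisv k)) * w$l)
    - r $ i $ j * r $ k $ l * (pairing u (wsq br (basisv i) (basisv k)) * v$j * w$l))"
  unfolding PLYBE_L_def
  by (simp add: ev3_sum ev3_cmult ev3_add ev3_diff ev3_tensor3 pairing_basis algebra_simps)

lemma evP: assumes "bilinear_op cc" "symmetric_tensor r"
  shows "ev3 (PLYBE_P cc r) u v w = pairing w (cc (rtilde r u) (rtilde r v))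
     - pairing v (cc (rtilde r u) (rtilde r w)) + pairing u (bsq cc (rtilde r w) (rtilde r v))"
  unfolding evP_raw T_A[OF assms(1), of w r u v] T_B[OF assms, of v u w] T_C[OF bil_bsq[OF assms(1)] assms(2), of u w v]
  by (simp add: sum.distrib sum_subtractf)

lemma evL: assumes "bilinear_op br" "symmetric_tensor r"
  shows "ev3 (PLYBE_L br r) u v w = pairing w (br (rtilde r u) (rtilde r v))
     + pairing v (br (rtilde r u) (rtilde r w)) - pairing u (wsq br (rtilde r v) (rtilde r w))"
  unfolding evL_raw T_A[OF assms(1), of w r u v] T_B[OF assms, of v u w] T_D[OF bil_wsq[OF assms(1)] assms(2), of u v w]
  by (simp add: sum.distrib sum_subtractf)

lemma pairing_diff: "pairing u (x - y) = pairing u x - pairing u y"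
  unfolding pairing_def by (simp add: right_diff_distrib sum_subtractf)
lemma pairing_add: "pairing u (x + y) = pairing u x + pairing u y"
  unfolding pairing_def by (simp add: distrib_left sum.distrib)

lemma pairing_T_sym: assumes "symmetric_tensor r"
  shows "pairing u (rtilde r v) = pairing v (rtilde r u)"
proof -
  have "pairing u (rtilde r v) = (\<Sum>j\<in>UNIV. \<Sum>i\<in>UNIV. u$j * (r$i$j * v$i))"
    unfolding pairing_def rtilde_nth by (simp add: sum_distrib_left)
  also have "\<dots> = (\<Sum>i\<in>UNIV. \<Sum>j\<in>UNIV. u$j * (r$i$j * v$i))" by (rule sum.swap)
  also have "\<dots> = pairing v (rtilde r u)"
    using assms unfolding pairing_def rtilde_nth symmetric_tensor_def
    by (simp add: sum_distrib_left mult_ac)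
  finally show ?thesis .
qed

lemma formB_T: assumes "nondegenerate r" shows "formB r (rtilde r u) m = pairing u m"
  using assms unfolding formB_def nondegenerate_def by (simp add: bij_is_inj)

lemma formB_sym: assumes "nondegenerate r" "symmetric_tensor r"
  shows "formB r a b = formB r b a"
proof -
  have s: "surj (rtilde r)" using assms(1) unfolding nondegenerate_def by (simp add: bij_is_surj)
  obtain a' where a: "a = rtilde r a'" using s by (metis surjD)
  obtain b' where b: "b = rtilde r b'" using s by (metis surjD)
  show ?thesis unfolding a b formB_T[OF assms(1)] by (rule pairing_T_sym[OF assms(2)])
qed


theorem proposition3p22:
  fixes cc br :: "'k::field_char_0 ^ 'n \<Rightarrow> 'k ^ 'n \<Rightarrow> 'k ^ 'n"
    and r :: "'k ^ 'n ^ 'n"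
  assumes "dual_pre_Poisson cc br"
    and "symmetric_tensor r"
    and "nondegenerate r"
  shows "PLYBE_solution cc br r \<longleftrightarrow>
    (\<forall>x y z. formB r (cc x y) z = formB r y (cc x z) + formB r x (bsq cc y z)) \<and>
    (\<forall>x y z. formB r (br x y) z = - formB r y (br x z) + formB r x (wsq br y z))"
proof -
  have bcb: "bilinear_op cc \<and> bilinear_op br" using assms(1) unfolding dual_pre_Poisson_def by blast
  then have bc: "bilinear_op cc" and bb: "bilinear_op br" by blast+
  let ?T = "rtilde r"
  have s: "surj ?T" using assms(3) unfolding nondegenerate_def by (simp add: bij_is_surj)
  define Q where "Q x y z = formB r (cc x y) z - formB r y (cc x z) - formB r x (bsq cc y z)" for x y z
  define R where "R x y z = formB r (br x y) z + formB r y (br x z) - formB r x (wsq br y z)" for x y z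
  have bsqa: "bsq cc z y = - bsq cc y z" for y z unfolding bsq_def by simp
  have pneg: "pairing u (- x) = - pairing u x" for u x :: "'k^'n"
    unfolding pairing_def by (simp add: sum_negf)
  have sym: "formB r a b = formB r b a" for a b by (rule formB_sym[OF assms(3,2)])
  have eP: "ev3 (PLYBE_P cc r) u v w = Q (?T u) (?T v) (?T w)" for u v w
  proof -
    have p1: "pairing w (cc (?T u) (?T v)) = formB r (cc (?T u) (?T v)) (?T w)"
      using formB_T[OF assms(3), of w "cc (?T u) (?T v)"] sym[of "cc (?T u) (?T v)" "?T w"] by simp
    have p2: "pairing v (cc (?T u) (?T w)) = formB r (?T v) (cc (?T u) (?T w))"
      by (rule formB_T[OF assms(3), symmetric])
    have p3: "pairing u (bsq cc (?T w) (?T v)) = - formB r (?T u) (bsq cc (?T v) (?T w))"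
      by (simp only: formB_T[OF assms(3)] bsqa[of "?T w" "?T v"] pneg)
    show ?thesis unfolding evP[OF bc assms(2)] p1 p2 p3 Q_def by simp
  qed
  have eL: "ev3 (PLYBE_L br r) u v w = R (?T u) (?T v) (?T w)" for u v w
  proof -
    have p1: "pairing w (br (?T u) (?T v)) = formB r (br (?T u) (?T v)) (?T w)"
      using formB_T[OF assms(3), of w "br (?T u) (?T v)"] sym[of "br (?T u) (?T v)" "?T w"] by simp
    have p2: "pairing v (br (?T u) (?T w)) = formB r (?T v) (br (?T u) (?T w))"
      by (rule formB_T[OF assms(3), symmetric])
    have p3: "pairing u (wsq br (?T v) (?T w)) = formB r (?T u) (wsq br (?T v) (?T w))"
      by (rule formB_T[OF assms(3), symmetric])
    show ?thesis unfolding evL[OF bb assms(2)] p1 p2 p3 R_def by simp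
  qed
  have allT: "(\<forall>u v w. F (?T u) (?T v) (?T w)) \<longleftrightarrow> (\<forall>x y z. F x y z)" for F
  proof
    assume H: "\<forall>u v w. F (?T u) (?T v) (?T w)"
    show "\<forall>x y z. F x y z"
    proof (intro allI)
      fix x y z
      obtain u where "x = ?T u" using s by (metis surjD)
      moreover obtain v where "y = ?T v" using s by (metis surjD)
      moreover obtain w where "z = ?T w" using s by (metis surjD)
      ultimately show "F x y z" using H by simp
    qed
  qed simp
  have "PLYBE_solution cc br r \<longleftrightarrow> (\<forall>x y z. Q x y z = 0) \<and> (\<forall>x y z. R x y z = 0)"
    unfolding PLYBE_solution_def ev3_zero eP eL allT[of "\<lambda>x y z. Q x y z = 0"] allT[of "\<lambda>x y z. R x y z = 0"] ..
  moreover have "Q x y z = 0 \<longleftrightarrow> formB r (cc x y) z = formB r y (cc x z) + formB r x (bsq cc y z)" for x y z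
    unfolding Q_def by (auto simp: algebra_simps)
  moreover have "R x y z = 0 \<longleftrightarrow> formB r (br x y) z = - formB r y (br x z) + formB r x (wsq br y z)" for x y z
    unfolding R_def by (auto simp: algebra_simps)
  ultimately show ?thesis by simp
qed

end
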